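(* Let $N\ge M\ge1$, let $(w_1,\dots,w_N)$ be a (generic) alphabet and let $y=(y_1,\dots,y_M)\in\mathbb{Z}^M$ be any collection of integers. Then for every $k\in\{1,\dots,N\}$, \[\mathcal{F}_y(w_1,\dots,w_N)\big|_{w_k=0}=\alpha\,\mathcal{F}_y(w_1,\dots,w_{k-1},w_{k+1},\dots,w_N).\]
   Context: $q>0$, $q\ne1$, $\alpha\ge0$. $\mathcal{B}_N$ is the group of signed permutations of $\{1,\dots,N\}$ acting by $\sigma(f(w_1,\dots,w_N))=f(w_{\sigma(1)},\dots,w_{\sigma(N)})$ with $w_{-k}:=1/(qw_k)$. With $V_k=\frac{q^{\binom{k}{2}}(1-q)^k}{\prod_{i=1}^k(1-q^i)(1+q^{i-1})}$ and $\varphi_y(w)=\frac{1-q-\alpha+\alpha w}{1-qw^2}\frac{(1-q)w}{1-w}\left(\frac{1-qw}{1-w}\right)^{y-1}$, for an alphabet of length $n\ge M$, \[\mathcal{F}_y(w_1,\dots,w_n)=V_{n-M}\alpha^{n-M}\sum_{\sigma\in\mathcal{B}_n}\sigma\!\left(\prod_{1\le i<j\le n}\left[\frac{w_i-qw_j}{w_i-w_j}\frac{1-w_iw_j}{1-qw_iw_j}\right]\prod_{i=1}^M\varphi_{y_i}(w_i)\right),\] and $\mathcal{F}_y(w_1,\dots,w_n):=0$ if $n<M$. *)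

theory Defs
  imports "HOL-Analysis.Analysis"
begin

text \<open>Alphabets are functions w :: nat => complex, used on the indices 1..n.
  Signed letters: w_{-j} = 1/(q w_j).\<close>

definition sletter :: "real \<Rightarrow> (nat \<Rightarrow> complex) \<Rightarrow> int \<Rightarrow> complex" where
  "sletter q w j = (if j > 0 then w (nat j) else 1 / (of_real q * w (nat (- j))))"

text \<open>The hyperoctahedral group B_n of signed permutations of {1..n}; a signed
  permutation sigma (with sigma(-i) = -sigma(i)) is determined by its values on 1..n,
  and we store it extensionally (value 0 outside 1..n).\<close>

definition signed_perms :: "nat \<Rightarrow> (nat \<Rightarrow> int) set" where
  "signed_perms n = {\<sigma>. (\<forall>i\<in>{1..n}. \<sigma> i \<noteq> 0 \<and> \<bar>\<sigma> i\<bar> \<le> int n)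
                       \<and> inj_on (\<lambda>i. \<bar>\<sigma> i\<bar>) {1..n}
                       \<and> (\<forall>i. i \<notin> {1..n} \<longrightarrow> \<sigma> i = 0)}"

text \<open>Action sigma(f)(w_1..w_n) = f(w_{sigma(1)},...,w_{sigma(n)}).\<close>

definition act_alphabet :: "real \<Rightarrow> (nat \<Rightarrow> int) \<Rightarrow> (nat \<Rightarrow> complex) \<Rightarrow> nat \<Rightarrow> complex" where
  "act_alphabet q \<sigma> w i = sletter q w (\<sigma> i)"

definition Vq :: "real \<Rightarrow> nat \<Rightarrow> real" where
  "Vq q k = q ^ (k choose 2) * (1 - q) ^ k /
            (\<Prod>i=1..k. (1 - q ^ i) * (1 + q ^ (i - 1)))"

definition phi :: "real \<Rightarrow> real \<Rightarrow> int \<Rightarrow> complex \<Rightarrow> complex" where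
  "phi q \<alpha> y w =
     (1 - of_real q - of_real \<alpha> + of_real \<alpha> * w) / (1 - of_real q * w ^ 2)
     * ((1 - of_real q) * w / (1 - w))
     * ((1 - of_real q * w) / (1 - w)) powi (y - 1)"

definition Fterm :: "real \<Rightarrow> real \<Rightarrow> nat \<Rightarrow> (nat \<Rightarrow> int) \<Rightarrow> nat \<Rightarrow> (nat \<Rightarrow> complex) \<Rightarrow> complex" where
  "Fterm q \<alpha> M y n u =
     (\<Prod>(i, j) \<in> {(i, j). 1 \<le> i \<and> i < j \<and> j \<le> n}.
         (u i - of_real q * u j) / (u i - u j) * ((1 - u i * u j) / (1 - of_real q * u i * u j)))
     * (\<Prod>i=1..M. phi q \<alpha> (y i) (u i))"

text \<open>F_y(w_1,...,w_n); y is indexed by 1..M.\<close>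

definition Fy :: "real \<Rightarrow> real \<Rightarrow> nat \<Rightarrow> (nat \<Rightarrow> int) \<Rightarrow> nat \<Rightarrow> (nat \<Rightarrow> complex) \<Rightarrow> complex" where
  "Fy q \<alpha> M y n w =
     (if n < M then 0
      else of_real (Vq q (n - M) * \<alpha> ^ (n - M))
           * (\<Sum>\<sigma>\<in>signed_perms n. Fterm q \<alpha> M y n (act_alphabet q \<sigma> w)))"

definition remove_letter :: "nat \<Rightarrow> (nat \<Rightarrow> complex) \<Rightarrow> nat \<Rightarrow> complex" where
  "remove_letter k w i = (if i < k then w i else w (i + 1))"

text \<open>Genericity of an alphabet w_1..w_n: every factor appearing in (a numerator or
  denominator of) the symmetrized formula is nonzero.\<close>

definition generic_alphabet :: "real \<Rightarrow> nat \<Rightarrow> (nat \<Rightarrow> complex) \<Rightarrow> bool" where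
  "generic_alphabet q n w \<longleftrightarrow>
     (\<forall>i\<in>{1..n}. w i \<noteq> 0) \<and>
     (\<forall>a b. a \<noteq> 0 \<and> b \<noteq> 0 \<and> \<bar>a\<bar> \<le> int n \<and> \<bar>b\<bar> \<le> int n \<longrightarrow>
        (\<bar>a\<bar> \<noteq> \<bar>b\<bar> \<longrightarrow> sletter q w a \<noteq> sletter q w b
                          \<and> of_real q * sletter q w a * sletter q w b \<noteq> 1
                          \<and> sletter q w a * sletter q w b \<noteq> 1
                          \<and> sletter q w a \<noteq> of_real q * sletter q w b) \<and>
        sletter q w a \<noteq> 1 \<and> of_real q * sletter q w a \<noteq> 1 \<and>
        of_real q * (sletter q w a) ^ 2 \<noteq> 1)"

end

theory Submission
  imports Defs
begin


definition liftk :: "nat \<Rightarrow> int \<Rightarrow> int" where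
  "liftk k v = (if v > 0 then (if v < int k then v else v + 1)
               else if v < 0 then (if - v < int k then v else v - 1) else 0)"

definition unliftk :: "nat \<Rightarrow> int \<Rightarrow> int" where
  "unliftk k v = (if v > 0 then (if v < int k then v else v - 1)
               else if v < 0 then (if - v < int k then v else v + 1) else 0)"

definition insp :: "nat \<Rightarrow> nat \<Rightarrow> int \<Rightarrow> (nat \<Rightarrow> int) \<Rightarrow> nat \<Rightarrow> int" where
  "insp k p s \<tau> j = (if j < p then liftk k (\<tau> j) else if j = p then s else liftk k (\<tau> (j - 1)))"

definition delp :: "nat \<Rightarrow> nat \<Rightarrow> (nat \<Rightarrow> int) \<Rightarrow> nat \<Rightarrow> int" where
  "delp k p \<sigma> j = unliftk k (\<sigma> (if j < p then j else Suc j))"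

definition posk :: "nat \<Rightarrow> nat \<Rightarrow> (nat \<Rightarrow> int) \<Rightarrow> nat" where
  "posk N k \<sigma> = (THE p. p \<in> {1..N} \<and> \<bar>\<sigma> p\<bar> = int k)"

lemma liftk_abs_ne: "k \<ge> 1 \<Longrightarrow> \<bar>liftk k v\<bar> \<noteq> int k"
  unfolding liftk_def by auto

lemma unlift_lift: "unliftk k (liftk k v) = v"
  unfolding liftk_def unliftk_def by (auto simp: abs_if split: if_splits)

lemma lift_unlift: "k \<ge> 1 \<Longrightarrow> \<bar>v\<bar> \<noteq> int k \<Longrightarrow> liftk k (unliftk k v) = v"
  unfolding liftk_def unliftk_def by (auto simp: abs_if split: if_splits)

lemma liftk_zero_iff: "liftk k v = 0 \<longleftrightarrow> v = 0"
  unfolding liftk_def by auto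

lemma unliftk_zero_iff: "k \<ge> 1 \<Longrightarrow> \<bar>v\<bar> \<noteq> int k \<Longrightarrow> unliftk k v = 0 \<longleftrightarrow> v = 0"
  unfolding unliftk_def by auto

lemma liftk_abs_bound: "\<bar>v\<bar> \<le> int n \<Longrightarrow> 1 \<le> k \<Longrightarrow> k \<le> Suc n \<Longrightarrow> \<bar>liftk k v\<bar> \<le> int (Suc n)"
  unfolding liftk_def by auto

lemma unliftk_abs_bound: "\<bar>v\<bar> \<le> int (Suc n) \<Longrightarrow> \<bar>v\<bar> \<noteq> int k \<Longrightarrow> 1 \<le> k \<Longrightarrow> k \<le> Suc n
   \<Longrightarrow> \<bar>unliftk k v\<bar> \<le> int n"
  unfolding unliftk_def by auto

lemma liftk_abs_inj: "\<bar>liftk k a\<bar> = \<bar>liftk k b\<bar> \<Longrightarrow> \<bar>a\<bar> = \<bar>b\<bar>"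
  unfolding liftk_def by (auto split: if_splits)

lemma unliftk_abs_inj: "\<bar>unliftk k a\<bar> = \<bar>unliftk k b\<bar> \<Longrightarrow> \<bar>a\<bar> \<noteq> int k \<Longrightarrow> \<bar>b\<bar> \<noteq> int k
   \<Longrightarrow> \<bar>a\<bar> = \<bar>b\<bar>"
  unfolding unliftk_def by (auto split: if_splits)

lemma sp_mem:
  assumes "\<sigma> \<in> signed_perms N" "i \<in> {1..N}"
  shows "\<sigma> i \<noteq> 0" "\<bar>\<sigma> i\<bar> \<le> int N"
  using assms unfolding signed_perms_def by auto

lemma sp_out:
  assumes "\<sigma> \<in> signed_perms N" "i \<notin> {1..N}"
  shows "\<sigma> i = 0"
  using assms unfolding signed_perms_def by auto

lemma sp_inj:
  assumes "\<sigma> \<in> signed_perms N" "i \<in> {1..N}" "j \<in> {1..N}" "\<bar>\<sigma> i\<bar> = \<bar>\<sigma> j\<bar>"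
  shows "i = j"
  using assms unfolding signed_perms_def inj_on_def by blast

lemma signed_perms_surj:
  assumes "\<sigma> \<in> signed_perms N" "k \<in> {1..N}"
  shows "\<exists>p\<in>{1..N}. \<bar>\<sigma> p\<bar> = int k"
proof -
  let ?f = "\<lambda>i. nat \<bar>\<sigma> i\<bar>"
  have im: "?f ` {1..N} \<subseteq> {1..N}"
  proof
    fix x assume "x \<in> ?f ` {1..N}"
    then obtain i where i: "i \<in> {1..N}" "x = ?f i" by blast
    have a: "\<sigma> i \<noteq> 0" "\<bar>\<sigma> i\<bar> \<le> int N" using sp_mem[OF assms(1) i(1)] by auto
    then have "1 \<le> \<bar>\<sigma> i\<bar>" by linarith
    then show "x \<in> {1..N}" using a(2) i(2) by auto
  qed
  have inj: "inj_on ?f {1..N}"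
  proof (rule inj_onI)
    fix a b assume ab: "a \<in> {1..N}" "b \<in> {1..N}" "?f a = ?f b"
    then have "\<bar>\<sigma> a\<bar> = \<bar>\<sigma> b\<bar>" by simp
    then show "a = b" using sp_inj[OF assms(1) ab(1,2)] by simp
  qed
  have "?f ` {1..N} = {1..N}" by (rule endo_inj_surj[OF _ im inj]) simp
  then have "k \<in> ?f ` {1..N}" using assms(2) by simp
  then obtain p where p: "p \<in> {1..N}" "nat \<bar>\<sigma> p\<bar> = k" by blast
  then have "\<bar>\<sigma> p\<bar> = int k" by simp
  then show ?thesis using p(1) by blast
qed

lemma posk:
  assumes "\<sigma> \<in> signed_perms N" "k \<in> {1..N}"
  shows "posk N k \<sigma> \<in> {1..N}" "\<bar>\<sigma> (posk N k \<sigma>)\<bar> = int k"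
    "\<And>j. j \<in> {1..N} \<Longrightarrow> \<bar>\<sigma> j\<bar> = int k \<Longrightarrow> j = posk N k \<sigma>"
proof -
  obtain p where p: "p \<in> {1..N}" "\<bar>\<sigma> p\<bar> = int k" using signed_perms_surj[OF assms] by blast
  have u: "j = p" if "j \<in> {1..N}" "\<bar>\<sigma> j\<bar> = int k" for j
    using sp_inj[OF assms(1) that(1) p(1)] that(2) p(2) by simp
  have "posk N k \<sigma> = p" unfolding posk_def
  proof (rule the_equality)
    show "p \<in> {1..N} \<and> \<bar>\<sigma> p\<bar> = int k" using p by blast
    show "\<And>j. j \<in> {1..N} \<and> \<bar>\<sigma> j\<bar> = int k \<Longrightarrow> j = p" using u by blast
  qed
  note e = this
  show "posk N k \<sigma> \<in> {1..N}" "\<bar>\<sigma> (posk N k \<sigma>)\<bar> = int k" using p e by simp_all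
  show "\<And>j. j \<in> {1..N} \<Longrightarrow> \<bar>\<sigma> j\<bar> = int k \<Longrightarrow> j = posk N k \<sigma>"
    using u e by metis
qed

lemma insp_mem:
  assumes "\<tau> \<in> signed_perms n" "1 \<le> k" "k \<le> Suc n" "p \<in> {1..Suc n}" "s \<in> {int k, - int k}"
  shows "insp k p s \<tau> \<in> signed_perms (Suc n)"
proof -
  have bnd: "insp k p s \<tau> i \<noteq> 0 \<and> \<bar>insp k p s \<tau> i\<bar> \<le> int (Suc n)" if i: "i \<in> {1..Suc n}" for i
  proof (cases "i = p")
    case True then show ?thesis using assms(2,3,5) by (auto simp: insp_def)
  next
    case False
    define i' where "i' = (if i < p then i else i - 1)"
    have i': "i' \<in> {1..n}" using i False assms(4) unfolding i'_def by auto
    have e: "insp k p s \<tau> i = liftk k (\<tau> i')" using False unfolding insp_def i'_def by auto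
    show ?thesis unfolding e using sp_mem[OF assms(1) i'] liftk_zero_iff liftk_abs_bound assms(2,3) by blast
  qed
  have absk: "\<bar>insp k p s \<tau> i\<bar> \<noteq> int k" if "i \<noteq> p" for i
    using that liftk_abs_ne[OF assms(2)] unfolding insp_def by auto
  have inj: "inj_on (\<lambda>i. \<bar>insp k p s \<tau> i\<bar>) {1..Suc n}"
  proof (rule inj_onI)
    fix a b assume a: "a \<in> {1..Suc n}" and b: "b \<in> {1..Suc n}" and ab: "\<bar>insp k p s \<tau> a\<bar> = \<bar>insp k p s \<tau> b\<bar>"
    have sp: "\<bar>insp k p s \<tau> p\<bar> = int k" using assms(5) by (auto simp: insp_def)
    show "a = b"
    proof (cases "a = p \<or> b = p")
      case True then show ?thesis using absk ab sp by metis
    next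
      case False
      define a' where "a' = (if a < p then a else a - 1)"
      define b' where "b' = (if b < p then b else b - 1)"
      have a': "a' \<in> {1..n}" using a False assms(4) unfolding a'_def by auto
      have b': "b' \<in> {1..n}" using b False assms(4) unfolding b'_def by auto
      have "insp k p s \<tau> a = liftk k (\<tau> a')" "insp k p s \<tau> b = liftk k (\<tau> b')"
        using False unfolding insp_def a'_def b'_def by auto
      then have "\<bar>\<tau> a'\<bar> = \<bar>\<tau> b'\<bar>" using ab liftk_abs_inj by metis
      then have "a' = b'" using sp_inj[OF assms(1) a' b'] by simp
      then show ?thesis using False a b unfolding a'_def b'_def by (auto split: if_splits)
    qed
  qed
  have out: "insp k p s \<tau> i = 0" if "i \<notin> {1..Suc n}" for i
  proof (cases "i = 0")
    case True
    then have "i < p" using assms(4) by auto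
    then show ?thesis using True sp_out[OF assms(1), of 0] liftk_zero_iff unfolding insp_def by auto
  next
    case False
    then have "i > Suc n" using that by auto
    then have "\<not> i < p" "i \<noteq> p" "i - 1 \<notin> {1..n}" using assms(4) by auto
    then show ?thesis using sp_out[OF assms(1), of "i - 1"] liftk_zero_iff unfolding insp_def by auto
  qed
  show ?thesis unfolding signed_perms_def using bnd inj out by blast
qed

lemma delp_mem:
  assumes "\<sigma> \<in> signed_perms (Suc n)" "1 \<le> k" "k \<le> Suc n" "p \<in> {1..Suc n}" "\<bar>\<sigma> p\<bar> = int k"
  shows "delp k p \<sigma> \<in> signed_perms n"
proof -
  let ?sk = "\<lambda>j. if j < p then j else Suc j"
  have skm: "?sk j \<in> {1..Suc n}" "?sk j \<noteq> p" if "j \<in> {1..n}" for j using that by auto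
  have nk: "\<bar>\<sigma> (?sk j)\<bar> \<noteq> int k" if "j \<in> {1..n}" for j
    using sp_inj[OF assms(1) skm(1)[OF that] assms(4)] skm(2)[OF that] assms(5) by auto
  have bnd: "delp k p \<sigma> j \<noteq> 0 \<and> \<bar>delp k p \<sigma> j\<bar> \<le> int n" if j: "j \<in> {1..n}" for j
    unfolding delp_def using sp_mem[OF assms(1) skm(1)[OF j]] nk[OF j] unliftk_zero_iff unliftk_abs_bound assms(2,3)
    by blast
  have inj: "inj_on (\<lambda>j. \<bar>delp k p \<sigma> j\<bar>) {1..n}"
  proof (rule inj_onI)
    fix a b assume a: "a \<in> {1..n}" and b: "b \<in> {1..n}" and ab: "\<bar>delp k p \<sigma> a\<bar> = \<bar>delp k p \<sigma> b\<bar>"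
    then have "\<bar>\<sigma> (?sk a)\<bar> = \<bar>\<sigma> (?sk b)\<bar>" unfolding delp_def using unliftk_abs_inj nk by blast
    then have "?sk a = ?sk b" using sp_inj[OF assms(1) skm(1)[OF a] skm(1)[OF b]] by blast
    then show "a = b" by (auto split: if_splits)
  qed
  have out: "delp k p \<sigma> j = 0" if "j \<notin> {1..n}" for j
  proof (cases "j = 0")
    case True
    then have "?sk j = 0" using assms(4) by auto
    then show ?thesis unfolding delp_def using sp_out[OF assms(1), of 0] by (simp add: unliftk_def)
  next
    case False
    then have "?sk j \<notin> {1..Suc n}" using that assms(4) by auto
    then show ?thesis unfolding delp_def using sp_out[OF assms(1), of "?sk j"] by (simp add: unliftk_def)
  qed
  show ?thesis unfolding signed_perms_def using bnd inj out by blast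
qed

lemma delp_insp: "delp k p (insp k p s \<tau>) = \<tau>"
  by (rule ext) (auto simp: delp_def insp_def unlift_lift)

lemma insp_delp:
  assumes "\<sigma> \<in> signed_perms (Suc n)" "1 \<le> k" "p \<in> {1..Suc n}" "\<bar>\<sigma> p\<bar> = int k"
  shows "insp k p (\<sigma> p) (delp k p \<sigma>) = \<sigma>"
proof
  fix j
  have nk: "\<bar>\<sigma> j\<bar> \<noteq> int k" if "j \<noteq> p" for j
  proof (cases "j \<in> {1..Suc n}")
    case True then show ?thesis using sp_inj[OF assms(1) True assms(3)] that assms(4) by auto
  next
    case False then show ?thesis using sp_out[OF assms(1) False] assms(2) by auto
  qed
  show "insp k p (\<sigma> p) (delp k p \<sigma>) j = \<sigma> j"
  proof (cases "j < p")
    case True then show ?thesis using nk[of j] lift_unlift[OF assms(2)] by (auto simp: insp_def delp_def)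
  next
    case False
    then show ?thesis using nk[of j] lift_unlift[OF assms(2)] by (auto simp: insp_def delp_def)
  qed
qed

lemma sum_signed_perms_decomp:
  assumes "1 \<le> k" "k \<le> Suc n"
  shows "(\<Sum>\<sigma>\<in>signed_perms (Suc n). G \<sigma>)
       = (\<Sum>p\<in>{1..Suc n}. \<Sum>s\<in>{int k, - int k}. \<Sum>\<tau>\<in>signed_perms n. G (insp k p s \<tau>))"
proof -
  let ?N = "Suc n"
  let ?T = "{1..Suc n} \<times> ({int k, - int k} \<times> signed_perms n)"
  have kN: "k \<in> {1..?N}" using assms by auto
  have "(\<Sum>\<sigma>\<in>signed_perms (Suc n). G \<sigma>) = (\<Sum>(p, s, \<tau>)\<in>?T. G (insp k p s \<tau>))"
  proof (rule sum.reindex_bij_witness[where j = "\<lambda>\<sigma>. (posk ?N k \<sigma>, \<sigma> (posk ?N k \<sigma>), delp k (posk ?N k \<sigma>) \<sigma>)"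
        and i = "\<lambda>(p, s, \<tau>). insp k p s \<tau>"])
    fix \<sigma> assume s: "\<sigma> \<in> signed_perms (Suc n)"
    note P = posk[OF s kN]
    show "(case (posk ?N k \<sigma>, \<sigma> (posk ?N k \<sigma>), delp k (posk ?N k \<sigma>) \<sigma>) of (p, s, \<tau>) \<Rightarrow> insp k p s \<tau>) = \<sigma>"
      using insp_delp[OF s assms(1) P(1,2)] by simp
    have "\<sigma> (posk ?N k \<sigma>) \<in> {int k, - int k}" using P(2) by auto
    then show "(posk ?N k \<sigma>, \<sigma> (posk ?N k \<sigma>), delp k (posk ?N k \<sigma>) \<sigma>) \<in> ?T"
      using P(1) delp_mem[OF s assms P(1,2)] by auto
    show "(case (posk ?N k \<sigma>, \<sigma> (posk ?N k \<sigma>), delp k (posk ?N k \<sigma>) \<sigma>) of (p, s, \<tau>) \<Rightarrow> G (insp k p s \<tau>)) = G \<sigma>"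
      using insp_delp[OF s assms(1) P(1,2)] by simp
  next
    fix b assume b: "b \<in> ?T"
    obtain p s \<tau> where bb: "b = (p, s, \<tau>)" by (cases b) auto
    have p: "p \<in> {1..?N}" and sk: "s \<in> {int k, - int k}" and t: "\<tau> \<in> signed_perms n" using b bb by auto
    have m: "insp k p s \<tau> \<in> signed_perms ?N" using insp_mem[OF t assms p sk] .
    then show "(case b of (p, s, \<tau>) \<Rightarrow> insp k p s \<tau>) \<in> signed_perms (Suc n)" using bb by simp
    have ip: "insp k p s \<tau> p = s" by (simp add: insp_def)
    have pe: "posk ?N k (insp k p s \<tau>) = p" using posk(3)[OF m kN p] ip sk by auto
    show "(\<lambda>\<sigma>. (posk ?N k \<sigma>, \<sigma> (posk ?N k \<sigma>), delp k (posk ?N k \<sigma>) \<sigma>)) (case b of (p, s, \<tau>) \<Rightarrow> insp k p s \<tau>) = b"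
      unfolding bb by (simp add: pe ip delp_insp)
  qed
  also have "\<dots> = (\<Sum>p\<in>{1..Suc n}. \<Sum>(s, \<tau>)\<in>{int k, - int k} \<times> signed_perms n. G (insp k p s \<tau>))"
    by (subst sum.cartesian_product[symmetric]) (simp add: case_prod_beta')
  also have "\<dots> = (\<Sum>p\<in>{1..Suc n}. \<Sum>s\<in>{int k, - int k}. \<Sum>\<tau>\<in>signed_perms n. G (insp k p s \<tau>))"
    by (subst sum.cartesian_product[symmetric]) simp
  finally show ?thesis .
qed



definition ins_at :: "nat \<Rightarrow> complex \<Rightarrow> (nat \<Rightarrow> complex) \<Rightarrow> nat \<Rightarrow> complex" where
  "ins_at p x v j = (if j < p then v j else if j = p then x else v (j - 1))"

definition ff :: "real \<Rightarrow> complex \<Rightarrow> complex \<Rightarrow> complex" where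
  "ff q a b = (a - of_real q * b) / (a - b) * ((1 - a * b) / (1 - of_real q * a * b))"

definition PP :: "real \<Rightarrow> nat \<Rightarrow> (nat \<Rightarrow> complex) \<Rightarrow> complex" where
  "PP q n u = (\<Prod>(i, j) \<in> {(i, j). 1 \<le> i \<and> i < j \<and> j \<le> n}. ff q (u i) (u j))"

lemma Fterm_eq: "Fterm q \<alpha> M y n u = PP q n u * (\<Prod>i=1..M. phi q \<alpha> (y i) (u i))"
  unfolding Fterm_def PP_def ff_def by simp

lemma finite_pairs: "finite {(i, j). 1 \<le> i \<and> i < (j::nat) \<and> j \<le> n}"
  by (rule finite_subset[of _ "{..n} \<times> {..n}"]) auto

lemma PP_ins:
  assumes p: "p \<in> {1..Suc n}"
  shows "PP q (Suc n) (ins_at p x v)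
     = (\<Prod>i\<in>{1..<p}. ff q (v i) x) * (\<Prod>j\<in>{p..n}. ff q x (v j)) * PP q n v"
proof -
  define P where "P m = {(i, j). 1 \<le> i \<and> i < (j::nat) \<and> j \<le> m}" for m
  define sk where "sk i = (if i < p then i else Suc i)" for i
  define A1 where "A1 = (\<lambda>i. (i, p)) ` {1..<p}"
  define A2 where "A2 = (\<lambda>j. (p, Suc j)) ` {p..n}"
  define A3 where "A3 = (\<lambda>(i, j). (sk i, sk j)) ` P n"
  let ?g = "\<lambda>(i, j). ff q (ins_at p x v i) (ins_at p x v j)"
  have PS: "P (Suc n) = A1 \<union> A2 \<union> A3"
  proof (intro equalityI subsetI)
    fix ij assume "ij \<in> P (Suc n)"
    then obtain i j where ij: "ij = (i, j)" "1 \<le> i" "i < j" "j \<le> Suc n" unfolding P_def by auto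
    show "ij \<in> A1 \<union> A2 \<union> A3"
    proof (cases "j = p")
      case True then show ?thesis using ij unfolding A1_def by auto
    next
      case jp: False
      show ?thesis
      proof (cases "i = p")
        case True
        then have "ij = (\<lambda>j. (p, Suc j)) (j - 1)" "j - 1 \<in> {p..n}" using ij by auto
        then show ?thesis unfolding A2_def by blast
      next
        case ip: False
        define i' where "i' = (if i < p then i else i - 1)"
        define j' where "j' = (if j < p then j else j - 1)"
        have "sk i' = i" "sk j' = j" using ip jp ij unfolding sk_def i'_def j'_def by auto
        moreover have "(i', j') \<in> P n" using ip jp ij p unfolding P_def i'_def j'_def by auto
        ultimately have "ij \<in> A3" unfolding A3_def using ij(1) by (metis (no_types, lifting) case_prod_conv image_eqI)
        then show ?thesis by blast
      qed
    qed
  next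
    fix ij assume "ij \<in> A1 \<union> A2 \<union> A3"
    then show "ij \<in> P (Suc n)" using p unfolding A1_def A2_def A3_def P_def sk_def by auto
  qed
  have d12: "A1 \<inter> A2 = {}" unfolding A1_def A2_def by auto
  have d3: "(A1 \<union> A2) \<inter> A3 = {}" unfolding A1_def A2_def A3_def sk_def by (auto split: if_splits)
  have fin: "finite A1" "finite A2" "finite A3" unfolding A1_def A2_def A3_def P_def
    using finite_pairs by auto
  have "PP q (Suc n) (ins_at p x v) = prod ?g (P (Suc n))" unfolding PP_def P_def by simp
  also have "\<dots> = prod ?g A1 * prod ?g A2 * prod ?g A3"
    unfolding PS using fin d12 d3 by (simp add: prod.union_disjoint)
  also have "prod ?g A1 = (\<Prod>i\<in>{1..<p}. ff q (v i) x)"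
    unfolding A1_def by (subst prod.reindex) (auto simp: inj_on_def ins_at_def)
  also have "prod ?g A2 = (\<Prod>j\<in>{p..n}. ff q x (v j))"
    unfolding A2_def by (subst prod.reindex) (auto simp: inj_on_def ins_at_def intro!: prod.cong)
  also have "prod ?g A3 = PP q n v"
  proof -
    have inj: "inj_on (\<lambda>(i, j). (sk i, sk j)) (P n)"
      unfolding inj_on_def sk_def by (auto split: if_splits)
    have "prod ?g A3 = prod (?g \<circ> (\<lambda>(i, j). (sk i, sk j))) (P n)"
      unfolding A3_def by (rule prod.reindex[OF inj])
    also have "\<dots> = PP q n v" unfolding PP_def P_def
      by (rule prod.cong) (auto simp: sk_def ins_at_def)
    finally show ?thesis .
  qed
  finally show ?thesis by simp
qed

lemma V_step:
  fixes q :: real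
  assumes "q > 0" "q \<noteq> 1"
  shows "Vq q (Suc K) * (\<Sum>m<Suc K. q ^ m + (1 / q) ^ m) = Vq q K"
proof -
  define S where "S K = (\<Sum>m<Suc K. q ^ m + (1 / q) ^ m)" for K
  have key: "S K * q ^ K * (1 - q) = (1 - q ^ Suc K) * (1 + q ^ K)" for K
  proof (induction K)
    case 0 then show ?case by (simp add: S_def)
  next
    case (Suc K)
    have "S (Suc K) = S K + q ^ Suc K + (1/q) ^ Suc K" unfolding S_def by simp
    then have "S (Suc K) * q ^ Suc K * (1 - q) = q * (S K * q ^ K * (1 - q)) + (q ^ Suc K * q ^ Suc K + (1/q) ^ Suc K * q ^ Suc K) * (1 - q)"
      by (simp add: algebra_simps)
    also have "(1/q) ^ Suc K * q ^ Suc K = 1" using assms(1) by (simp add: power_one_over)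
    also note Suc.IH
    finally show ?case by (simp add: algebra_simps power2_eq_square flip: power_add)
  qed
  have pos: "(1 - q ^ i) * (1 + q ^ (i - 1)) \<noteq> 0" if "i \<ge> 1" for i
  proof -
    have "q ^ i \<noteq> 1 ^ i" using assms that power_eq_iff_eq_base[of i q 1] by simp
    then have "q ^ i \<noteq> 1" by simp
    moreover have "1 + q ^ (i - 1) > 0" using assms by (simp add: add_pos_pos)
    ultimately show ?thesis by auto
  qed
  have D: "(\<Prod>i=1..Suc K. (1 - q ^ i) * (1 + q ^ (i - 1))) = (\<Prod>i=1..K. (1 - q ^ i) * (1 + q ^ (i - 1))) * ((1 - q ^ Suc K) * (1 + q ^ K))"
    by (simp add: prod.nat_ivl_Suc')
  have Dnz: "(\<Prod>i=1..K. (1 - q ^ i) * (1 + q ^ (i - 1))) \<noteq> 0" using pos by (simp add: prod_zero_iff)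
  have C: "Suc K choose 2 = (K choose 2) + K" by (simp add: numeral_2_eq_2)
  have "Vq q (Suc K) * S K = q ^ (K choose 2) * (1 - q) ^ K / (\<Prod>i=1..K. (1 - q ^ i) * (1 + q ^ (i - 1)))
          * ((S K * q ^ K * (1 - q)) / ((1 - q ^ Suc K) * (1 + q ^ K)))"
    unfolding Vq_def D C using Dnz pos[of "Suc K"] by (simp add: field_simps power_add)
  also have "\<dots> = Vq q K" unfolding key Vq_def using pos[of "Suc K"] by simp
  finally show ?thesis unfolding S_def .
qed



lemma ev_nz: fixes f :: "complex \<Rightarrow> complex"
  shows "((f \<longlongrightarrow> c) F) \<Longrightarrow> c \<noteq> 0 \<Longrightarrow> eventually (\<lambda>z. f z \<noteq> 0) F"
  by (rule tendsto_imp_eventually_ne)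

lemma ev_z: "\<forall>\<^sub>F z in at (0::complex). z \<noteq> 0"
  by (simp add: eventually_at_filter)

lemma lim_ff1:
  assumes "a \<noteq> 0"
  shows "((\<lambda>z. ff q a z) \<longlongrightarrow> 1) (at 0)"
proof -
  have "((\<lambda>z. ff q a z) \<longlongrightarrow> ff q a 0) (at 0)" unfolding ff_def
    using assms by (intro tendsto_intros) auto
  then show ?thesis using assms by (simp add: ff_def)
qed

lemma lim_ff2:
  assumes "a \<noteq> 0"
  shows "((\<lambda>z. ff q z a) \<longlongrightarrow> of_real q) (at 0)"
proof -
  have "((\<lambda>z. ff q z a) \<longlongrightarrow> ff q 0 a) (at 0)" unfolding ff_def
    using assms by (intro tendsto_intros) auto
  then show ?thesis using assms by (simp add: ff_def)
qed

lemma lim_ff3: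
  assumes "a \<noteq> 0" "q > 0"
  shows "((\<lambda>z. ff q a (1 / (of_real q * z))) \<longlongrightarrow> 1) (at 0)"
proof -
  let ?Q = "of_real q :: complex"
  have Q: "?Q \<noteq> 0" using assms by simp
  let ?h = "\<lambda>z. ?Q * (a * z - 1) / (?Q * a * z - 1) * ((?Q * z - a) / (?Q * (z - a)))"
  have l: "(?h \<longlongrightarrow> ?h 0) (at 0)" using assms Q by (intro tendsto_intros) auto
  have h0: "?h 0 = 1" using assms Q by simp
  have e1: "\<forall>\<^sub>F z in at 0. ?Q * a * z - 1 \<noteq> 0"
    by (rule ev_nz[of _ "?Q * a * 0 - 1"]) (intro tendsto_intros, simp)
  have e2: "\<forall>\<^sub>F z in at 0. z - a \<noteq> 0"
    by (rule ev_nz[of _ "0 - a"]) (intro tendsto_intros, use assms in simp)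
  have "\<forall>\<^sub>F z in at 0. ?h z = ff q a (1 / (?Q * z))"
    using e1 e2 ev_z
  proof eventually_elim
    case (elim z)
    have d1: "a - ?Q * (1 / (?Q * z)) = (a * z - 1) / z" using elim Q by (simp add: field_simps)
    have d2: "a - 1 / (?Q * z) = (?Q * a * z - 1) / (?Q * z)" using elim Q by (simp add: field_simps)
    have d3: "1 - a * (1 / (?Q * z)) = (?Q * z - a) / (?Q * z)" using elim Q by (simp add: field_simps)
    have d4: "1 - ?Q * a * (1 / (?Q * z)) = (z - a) / z" using elim Q by (simp add: field_simps)
    have r1: "(a - ?Q * (1 / (?Q * z))) / (a - 1 / (?Q * z)) = ?Q * (a * z - 1) / (?Q * a * z - 1)"
      unfolding d1 d2 using elim Q by (simp add: field_simps)
    have r2: "(1 - a * (1 / (?Q * z))) / (1 - ?Q * a * (1 / (?Q * z))) = (?Q * z - a) / (?Q * (z - a))"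
      unfolding d3 d4 using elim Q by (simp add: field_simps)
    show ?case unfolding ff_def r1 r2 ..
  qed
  then show ?thesis using Lim_transform_eventually[OF l] h0 by simp
qed

lemma lim_ff4:
  assumes "a \<noteq> 0" "q > 0"
  shows "((\<lambda>z. ff q (1 / (of_real q * z)) a) \<longlongrightarrow> 1 / of_real q) (at 0)"
proof -
  let ?Q = "of_real q :: complex"
  have Q: "?Q \<noteq> 0" using assms by simp
  let ?h = "\<lambda>z. (1 - ?Q * ?Q * a * z) / (1 - ?Q * a * z) * ((?Q * z - a) / (?Q * (z - a)))"
  have l: "(?h \<longlongrightarrow> ?h 0) (at 0)" using assms Q by (intro tendsto_intros) auto
  have h0: "?h 0 = 1 / ?Q" using assms Q by simp
  have e1: "\<forall>\<^sub>F z in at 0. 1 - ?Q * a * z \<noteq> 0"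
    by (rule ev_nz[of _ "1 - ?Q * a * 0"]) (intro tendsto_intros, simp)
  have e2: "\<forall>\<^sub>F z in at 0. z - a \<noteq> 0"
    by (rule ev_nz[of _ "0 - a"]) (intro tendsto_intros, use assms in simp)
  have "\<forall>\<^sub>F z in at 0. ?h z = ff q (1 / (?Q * z)) a"
    using e1 e2 ev_z
  proof eventually_elim
    case (elim z)
    have d1: "1 / (?Q * z) - ?Q * a = (1 - ?Q * ?Q * a * z) / (?Q * z)" using elim Q by (simp add: field_simps)
    have d2: "1 / (?Q * z) - a = (1 - ?Q * a * z) / (?Q * z)" using elim Q by (simp add: field_simps)
    have d3: "1 - 1 / (?Q * z) * a = (?Q * z - a) / (?Q * z)" using elim Q by (simp add: field_simps)
    have d4: "1 - ?Q * (1 / (?Q * z)) * a = (z - a) / z" using elim Q by (simp add: field_simps)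
    have r1: "(1 / (?Q * z) - ?Q * a) / (1 / (?Q * z) - a) = (1 - ?Q * ?Q * a * z) / (1 - ?Q * a * z)"
      unfolding d1 d2 using elim Q by (simp add: field_simps)
    have r2: "(1 - 1 / (?Q * z) * a) / (1 - ?Q * (1 / (?Q * z)) * a) = (?Q * z - a) / (?Q * (z - a))"
      unfolding d3 d4 using elim Q by (simp add: field_simps)
    show ?case unfolding ff_def r1 r2 ..
  qed
  then show ?thesis using Lim_transform_eventually[OF l] h0 by simp
qed

lemma lim_phi1: "((\<lambda>z. phi q \<alpha> y z) \<longlongrightarrow> 0) (at 0)"
proof -
  have "((\<lambda>z. phi q \<alpha> y z) \<longlongrightarrow> phi q \<alpha> y 0) (at 0)" unfolding phi_def
    by (intro tendsto_intros) auto
  then show ?thesis by (simp add: phi_def)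
qed

lemma lim_phi2:
  assumes "q > 0"
  shows "((\<lambda>z. phi q \<alpha> y (1 / (of_real q * z))) \<longlongrightarrow> 0) (at 0)"
proof -
  let ?Q = "of_real q :: complex"
  let ?A = "of_real \<alpha> :: complex"
  have Q: "?Q \<noteq> 0" using assms by simp
  let ?h = "\<lambda>z. ((1 - ?Q - ?A) * ?Q * z * z + ?A * z) / (?Q * z * z - 1) * ((1 - ?Q) / (?Q * z - 1))
      * (?Q * (z - 1) / (?Q * z - 1)) powi (y - 1)"
  have l: "(?h \<longlongrightarrow> ?h 0) (at 0)" using assms Q by (intro tendsto_intros) auto
  have h0: "?h 0 = 0" by simp
  have e1: "\<forall>\<^sub>F z in at 0. ?Q * z * z - 1 \<noteq> 0"
    by (rule ev_nz[of _ "?Q * 0 * 0 - 1"]) (intro tendsto_intros, simp)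
  have e2: "\<forall>\<^sub>F z in at 0. ?Q * z - 1 \<noteq> 0"
    by (rule ev_nz[of _ "?Q * 0 - 1"]) (intro tendsto_intros, simp)
  have "\<forall>\<^sub>F z in at 0. ?h z = phi q \<alpha> y (1 / (?Q * z))"
    using e1 e2 ev_z
  proof eventually_elim
    case (elim z)
    have d1: "(1 - ?Q - ?A + ?A * (1 / (?Q * z))) / (1 - ?Q * (1 / (?Q * z)) ^ 2)
        = ((1 - ?Q - ?A) * ?Q * z * z + ?A * z) / (?Q * z * z - 1)"
      using elim Q by (simp add: field_simps power2_eq_square)
    have d2: "(1 - ?Q) * (1 / (?Q * z)) / (1 - 1 / (?Q * z)) = (1 - ?Q) / (?Q * z - 1)"
      using elim Q by (simp add: field_simps)
    have d3: "(1 - ?Q * (1 / (?Q * z))) / (1 - 1 / (?Q * z)) = ?Q * (z - 1) / (?Q * z - 1)"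
      using elim Q by (simp add: field_simps)
    show ?case unfolding phi_def d1 d2 d3 by simp
  qed
  then show ?thesis using Lim_transform_eventually[OF l] h0 by simp
qed



lemma sletter_lift:
  assumes "k \<ge> 1"
  shows "sletter q (w(k := z)) (liftk k t) = sletter q (remove_letter k w) t"
proof -
  consider "t > 0" "t < int k" | "t \<ge> int k" | "t = 0" | "t < 0" "- t < int k" | "- t \<ge> int k"
    by linarith
  then show ?thesis
  proof cases
    case 1
    then have "nat t \<noteq> k" "nat t < k" by auto
    then show ?thesis using 1 by (simp add: liftk_def sletter_def remove_letter_def)
  next
    case 2
    then have "t > 0" "nat (t + 1) = Suc (nat t)" "Suc (nat t) \<noteq> k" "\<not> nat t < k" using assms by auto
    then show ?thesis using 2 by (simp add: liftk_def sletter_def remove_letter_def)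
  next
    case 3
    then show ?thesis using assms by (simp add: liftk_def sletter_def remove_letter_def)
  next
    case 4
    then have "nat (- t) \<noteq> k" "nat (- t) < k" by auto
    then show ?thesis using 4 by (simp add: liftk_def sletter_def remove_letter_def)
  next
    case 5
    then have "t < 0" "nat (- (t - 1)) = Suc (nat (- t))" "Suc (nat (- t)) \<noteq> k" "\<not> nat (- t) < k"
      using assms by auto
    then show ?thesis using 5 by (simp add: liftk_def sletter_def remove_letter_def)
  qed
qed

lemma act_insp:
  assumes "k \<ge> 1"
  shows "act_alphabet q (insp k p s \<tau>) (w(k := z))
       = ins_at p (sletter q (w(k := z)) s) (act_alphabet q \<tau> (remove_letter k w))"
  by (rule ext) (simp add: act_alphabet_def insp_def ins_at_def sletter_lift[OF assms])

lemma term_limit: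
  assumes q: "q > 0" and v: "\<And>i. i \<in> {1..n} \<Longrightarrow> v i \<noteq> 0" and p: "p \<in> {1..Suc n}"
    and l1: "\<And>a. a \<noteq> 0 \<Longrightarrow> ((\<lambda>z. ff q a (X z)) \<longlongrightarrow> 1) (at 0)"
    and l2: "\<And>a. a \<noteq> 0 \<Longrightarrow> ((\<lambda>z. ff q (X z) a) \<longlongrightarrow> c) (at 0)"
    and l3: "\<And>t. ((\<lambda>z. phi q \<alpha> t (X z)) \<longlongrightarrow> 0) (at 0)"
  shows "((\<lambda>z. Fterm q \<alpha> M y (Suc n) (ins_at p (X z) v)) \<longlongrightarrow>
           (if p \<le> M then 0 else c ^ (Suc n - p) * Fterm q \<alpha> M y n v)) (at 0)"
proof -
  define A where "A z = (\<Prod>i\<in>{1..<p}. ff q (v i) (X z)) * (\<Prod>j\<in>{p..n}. ff q (X z) (v j))" for z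
  have AL: "(A \<longlongrightarrow> c ^ (Suc n - p)) (at 0)"
  proof -
    have "((\<lambda>z. \<Prod>i\<in>{1..<p}. ff q (v i) (X z)) \<longlongrightarrow> (\<Prod>i\<in>{1..<p}. 1)) (at 0)"
      by (rule tendsto_prod) (use p v l1 in auto)
    moreover have "((\<lambda>z. \<Prod>j\<in>{p..n}. ff q (X z) (v j)) \<longlongrightarrow> (\<Prod>j\<in>{p..n}. c)) (at 0)"
      by (rule tendsto_prod) (use p v l2 in auto)
    ultimately have "(A \<longlongrightarrow> (\<Prod>i\<in>{1..<p}. 1) * (\<Prod>j\<in>{p..n}. c)) (at 0)"
      unfolding A_def by (rule tendsto_mult)
    moreover have "(\<Prod>i\<in>{1..<p}. 1) * (\<Prod>j\<in>{p..n}. c) = c ^ (Suc n - p)" by simp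
    ultimately show ?thesis by simp
  qed
  have F: "Fterm q \<alpha> M y (Suc n) (ins_at p (X z) v)
      = A z * PP q n v * (\<Prod>i=1..M. phi q \<alpha> (y i) (ins_at p (X z) v i))" for z
    unfolding Fterm_eq PP_ins[OF p] A_def by simp
  show ?thesis
  proof (cases "p \<le> M")
    case False
    then have "(\<Prod>i=1..M. phi q \<alpha> (y i) (ins_at p (X z) v i)) = (\<Prod>i=1..M. phi q \<alpha> (y i) (v i))" for z
      by (intro prod.cong) (auto simp: ins_at_def)
    note eqp = this
    have F': "Fterm q \<alpha> M y (Suc n) (ins_at p (X z) v) = A z * Fterm q \<alpha> M y n v" for z
      using F[of z] eqp[of z] by (simp add: Fterm_eq[of q \<alpha> M y n v] mult.assoc)
    show ?thesis unfolding F' using False by (auto intro!: tendsto_intros AL)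
  next
    case True
    have "(\<Prod>i=1..M. phi q \<alpha> (y i) (ins_at p (X z) v i))
        = phi q \<alpha> (y p) (X z) * (\<Prod>i\<in>{1..M} - {p}. phi q \<alpha> (y i) (ins_at p 0 v i))" for z
    proof -
      have "p \<in> {1..M}" using True p by auto
      then have "(\<Prod>i=1..M. phi q \<alpha> (y i) (ins_at p (X z) v i))
          = phi q \<alpha> (y p) (ins_at p (X z) v p) * (\<Prod>i\<in>{1..M} - {p}. phi q \<alpha> (y i) (ins_at p (X z) v i))"
        by (simp add: prod.remove)
      also have "(\<Prod>i\<in>{1..M} - {p}. phi q \<alpha> (y i) (ins_at p (X z) v i)) = (\<Prod>i\<in>{1..M} - {p}. phi q \<alpha> (y i) (ins_at p 0 v i))"
        by (intro prod.cong) (auto simp: ins_at_def)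
      finally show ?thesis by (simp add: ins_at_def)
    qed
    then have F': "Fterm q \<alpha> M y (Suc n) (ins_at p (X z) v)
        = A z * PP q n v * (phi q \<alpha> (y p) (X z) * (\<Prod>i\<in>{1..M} - {p}. phi q \<alpha> (y i) (ins_at p 0 v i)))" for z
      unfolding F by simp
    have "((\<lambda>z. A z * PP q n v * (phi q \<alpha> (y p) (X z) * (\<Prod>i\<in>{1..M} - {p}. phi q \<alpha> (y i) (ins_at p 0 v i))))
        \<longlongrightarrow> c ^ (Suc n - p) * PP q n v * (0 * (\<Prod>i\<in>{1..M} - {p}. phi q \<alpha> (y i) (ins_at p 0 v i)))) (at 0)"
      by (intro tendsto_intros AL l3)
    then show ?thesis unfolding F' using True by simp
  qed
qed



lemma sum_tail_reindex:
  fixes f :: "nat \<Rightarrow> complex"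
  assumes "M \<le> N"
  shows "(\<Sum>p\<in>{1..N}. if p \<le> M then 0 else f (N - p)) = (\<Sum>m<N - M. f m)"
proof -
  have "(\<Sum>p\<in>{1..N}. if p \<le> M then 0 else f (N - p)) = (\<Sum>p\<in>{Suc M..N}. f (N - p))"
  proof -
    have "(\<Sum>p\<in>{1..N}. if p \<le> M then 0 else f (N - p)) = (\<Sum>p\<in>{1..N}. if \<not> p \<le> M then f (N - p) else 0)"
      by (intro sum.cong) auto
    also have "\<dots> = (\<Sum>p\<in>{p\<in>{1..N}. \<not> p \<le> M}. f (N - p))" by (rule sum.inter_filter[symmetric]) simp
    also have "{p\<in>{1..N}. \<not> p \<le> M} = {Suc M..N}" by auto
    finally show ?thesis .
  qed
  also have "\<dots> = (\<Sum>m<N - M. f m)"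
    by (rule sum.reindex_bij_witness[where i = "\<lambda>m. N - m" and j = "\<lambda>p. N - p"]) (use assms in auto)
  finally show ?thesis .
qed

theorem proposition6p3:
  fixes q \<alpha> :: real and M N k :: nat and y :: "nat \<Rightarrow> int" and w :: "nat \<Rightarrow> complex"
  assumes "q > 0" and "q \<noteq> 1" and "\<alpha> \<ge> 0"
    and "1 \<le> M" and "M \<le> N"
    and "k \<in> {1..N}"
    and "generic_alphabet q (N - 1) (remove_letter k w)"
  shows "((\<lambda>z. Fy q \<alpha> M y N (w(k := z)))
           \<longlongrightarrow> of_real \<alpha> * Fy q \<alpha> M y (N - 1) (remove_letter k w)) (at 0)"
proof -
  obtain n where N: "N = Suc n" using assms(6) by (cases N) auto
  define w' where "w' = remove_letter k w"
  define Q where "Q = (of_real q :: complex)"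
  have Q: "Q \<noteq> 0" using assms(1) unfolding Q_def by simp
  have k1: "1 \<le> k" "k \<le> Suc n" using assms(6) N by auto
  define v where "v \<tau> = act_alphabet q \<tau> w'" for \<tau>
  define X where "X s z = sletter q (w(k := z)) s" for s z
  define c where "c s = (if s = int k then Q else 1 / Q)" for s
  have gen: "\<And>i. i \<in> {1..n} \<Longrightarrow> w' i \<noteq> 0" using assms(7) N unfolding generic_alphabet_def w'_def by auto
  have vnz: "v \<tau> i \<noteq> 0" if "\<tau> \<in> signed_perms n" "i \<in> {1..n}" for \<tau> i
  proof -
    have m: "\<tau> i \<noteq> 0" "\<bar>\<tau> i\<bar> \<le> int n" using sp_mem[OF that] by auto
    show ?thesis
    proof (cases "\<tau> i > 0")
      case True
      then have "nat (\<tau> i) \<in> {1..n}" using m by auto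
      then show ?thesis using gen True unfolding v_def act_alphabet_def sletter_def by auto
    next
      case False
      then have "nat (- \<tau> i) \<in> {1..n}" using m by auto
      then show ?thesis using gen False assms(1) unfolding v_def act_alphabet_def sletter_def by auto
    qed
  qed
  define L where "L p s \<tau> = (if p \<le> M then 0 else c s ^ (Suc n - p) * Fterm q \<alpha> M y n (v \<tau>))" for p s \<tau>
  have lim1: "((\<lambda>z. Fterm q \<alpha> M y (Suc n) (act_alphabet q (insp k p s \<tau>) (w(k := z)))) \<longlongrightarrow> L p s \<tau>) (at 0)"
    if p: "p \<in> {1..Suc n}" and s: "s \<in> {int k, - int k}" and t: "\<tau> \<in> signed_perms n" for p s \<tau>
  proof -
    have e: "act_alphabet q (insp k p s \<tau>) (w(k := z)) = ins_at p (X s z) (v \<tau>)" for z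
      unfolding X_def v_def w'_def by (rule act_insp[OF k1(1)])
    have sc: "s = int k \<or> s = - int k" using s by auto
    have xs1: "s = int k \<Longrightarrow> X s z = z" for z using k1 unfolding X_def sletter_def by auto
    have xs2: "s = - int k \<Longrightarrow> X s z = 1 / (of_real q * z)" for z using k1 unfolding X_def sletter_def by auto
    have cs1: "s = int k \<Longrightarrow> c s = of_real q" unfolding c_def Q_def by auto
    have cs2: "s = - int k \<Longrightarrow> c s = 1 / of_real q" using k1 unfolding c_def Q_def by auto
    have l1: "((\<lambda>z. ff q a (X s z)) \<longlongrightarrow> 1) (at 0)" if "a \<noteq> 0" for a
      using sc lim_ff1[OF that] lim_ff3[OF that assms(1)] xs1 xs2 by auto
    have l2: "((\<lambda>z. ff q (X s z) a) \<longlongrightarrow> c s) (at 0)" if "a \<noteq> 0" for a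
      using sc lim_ff2[OF that] lim_ff4[OF that assms(1)] xs1 xs2 cs1 cs2 by auto
    have l3: "((\<lambda>z. phi q \<alpha> t (X s z)) \<longlongrightarrow> 0) (at 0)" for t
      using sc lim_phi1 lim_phi2[OF assms(1)] xs1 xs2 by auto
    show ?thesis unfolding e L_def by (rule term_limit[OF assms(1) vnz[OF t] p l1 l2 l3])
  qed
  define CN :: complex where "CN = of_real (Vq q (N - M) * \<alpha> ^ (N - M))"
  have FyN: "Fy q \<alpha> M y N (w(k := z)) = CN * (\<Sum>p\<in>{1..Suc n}. \<Sum>s\<in>{int k, - int k}. \<Sum>\<tau>\<in>signed_perms n.
      Fterm q \<alpha> M y (Suc n) (act_alphabet q (insp k p s \<tau>) (w(k := z))))" for z
  proof -
    have nlt: "\<not> Suc n < M" using assms(5) N by simp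
    have dec: "(\<Sum>\<sigma>\<in>signed_perms (Suc n). Fterm q \<alpha> M y (Suc n) (act_alphabet q \<sigma> (w(k := z))))
      = (\<Sum>p\<in>{1..Suc n}. \<Sum>s\<in>{int k, - int k}. \<Sum>\<tau>\<in>signed_perms n.
      Fterm q \<alpha> M y (Suc n) (act_alphabet q (insp k p s \<tau>) (w(k := z))))"
      by (rule sum_signed_perms_decomp[OF k1])
    show ?thesis unfolding Fy_def CN_def N if_not_P[OF nlt] dec by (rule refl)
  qed
  have lim: "((\<lambda>z. Fy q \<alpha> M y N (w(k := z))) \<longlongrightarrow>
       CN * (\<Sum>p\<in>{1..Suc n}. \<Sum>s\<in>{int k, - int k}. \<Sum>\<tau>\<in>signed_perms n. L p s \<tau>)) (at 0)"
    unfolding FyN by (intro tendsto_mult tendsto_const tendsto_sum lim1) auto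
  define S' where "S' = (\<Sum>\<tau>\<in>signed_perms n. Fterm q \<alpha> M y n (v \<tau>))"
  have kk: "int k \<noteq> - int k" using k1 by simp
  have inner: "(\<Sum>s\<in>{int k, - int k}. \<Sum>\<tau>\<in>signed_perms n. L p s \<tau>)
      = (if p \<le> M then 0 else (Q ^ (Suc n - p) + (1 / Q) ^ (Suc n - p))) * S'" for p
    unfolding L_def S'_def c_def using kk by (simp add: sum_distrib_left algebra_simps)
  have tot: "(\<Sum>p\<in>{1..Suc n}. \<Sum>s\<in>{int k, - int k}. \<Sum>\<tau>\<in>signed_perms n. L p s \<tau>)
      = (\<Sum>m<Suc n - M. Q ^ m + (1 / Q) ^ m) * S'"
  proof -
    have "(\<Sum>p\<in>{1..Suc n}. \<Sum>s\<in>{int k, - int k}. \<Sum>\<tau>\<in>signed_perms n. L p s \<tau>)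
        = (\<Sum>p\<in>{1..Suc n}. (if p \<le> M then 0 else (Q ^ (Suc n - p) + (1 / Q) ^ (Suc n - p)))) * S'"
      unfolding inner by (simp only: sum_distrib_right)
    also have "\<dots> = (\<Sum>m<Suc n - M. Q ^ m + (1 / Q) ^ m) * S'"
      using sum_tail_reindex[of M "Suc n" "\<lambda>m. Q ^ m + (1 / Q) ^ m"] assms(5) N by simp
    finally show ?thesis .
  qed
  have goal: "CN * ((\<Sum>m<Suc n - M. Q ^ m + (1 / Q) ^ m) * S') = of_real \<alpha> * Fy q \<alpha> M y (N - 1) (remove_letter k w)"
  proof (cases "n < M")
    case True
    then have "Suc n - M = 0" by simp
    then show ?thesis using True N unfolding Fy_def by simp
  next
    case False
    define K where "K = n - M"
    have NK: "N - M = Suc K" "n - M = K" using False N unfolding K_def by auto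
    have sr: "(\<Sum>m<Suc K. Q ^ m + (1 / Q) ^ m) = of_real (\<Sum>m<Suc K. q ^ m + (1 / q) ^ m)"
      unfolding Q_def by simp
    have "Fy q \<alpha> M y (N - 1) (remove_letter k w) = of_real (Vq q K * \<alpha> ^ K) * S'"
      unfolding Fy_def S'_def v_def w'_def using False N NK by simp
    moreover have "CN * ((\<Sum>m<Suc n - M. Q ^ m + (1 / Q) ^ m)) = of_real \<alpha> * of_real (Vq q K * \<alpha> ^ K)"
    proof -
      have "CN * ((\<Sum>m<Suc n - M. Q ^ m + (1 / Q) ^ m))
          = of_real (Vq q (Suc K) * (\<Sum>m<Suc K. q ^ m + (1 / q) ^ m) * \<alpha> ^ Suc K)"
        unfolding CN_def NK using N NK sr by (simp add: algebra_simps)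
      also have "\<dots> = of_real (Vq q K * \<alpha> ^ Suc K)" using V_step[OF assms(1,2)] by simp
      finally show ?thesis by (simp add: algebra_simps)
    qed
    ultimately show ?thesis by (simp add: algebra_simps)
  qed
  show ?thesis using lim unfolding tot goal by simp
qed

end
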